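(* Let $(\sigma_n)_{n \geq 1}$ be a sequence of permutations with $\sigma_n \in \mathcal{S}_n$ for all $n$, and let $\Sigma_n \in U(n)$ be the permutation matrix of $\sigma_n$, i.e. $\Sigma_n e_j = e_{\sigma_n(j)}$. Then $(\Sigma_n)_{n \geq 1}$ is a virtual isometry if and only if $(\sigma_n)_{n \geq 1}$ is a virtual permutation.
   Context: For $n \geq m \geq 1$, let $p_{n,m}:\mathcal{S}_n\to\mathcal{S}_m$ map $\sigma$ to the permutation obtained by deleting all elements of $\{m+1,\dots,n\}$ from the cycle structure of $\sigma$. A virtual permutation is a sequence $(\sigma_n)_{n\ge1}$ with $\sigma_n\in\mathcal{S}_n$ and $\sigma_m = p_{n,m}(\sigma_n)$ for all $n\ge m\ge1$. Let $(e_k)_{k\ge1}$ be the canonical basis of $\ell^2$; identify $\mathbb{C}^n$ with the span of $e_1,\dots,e_n$ and $U(n)$ with the unitary operators on $\ell^2$ fixing every $e_k$, $k>n$. For $n\ge m\ge1$ and $u\in U(n)$, $\pi_{n,m}(u)$ is the unique $v\in U(m)$ such that the range of $u-v$ is contained in $(u-\mathrm{Id})(\mathrm{span}\{e_k:k>m\})$ (existence and uniqueness are known). A virtual isometry is a sequence $(u_n)_{n\ge1}$ with $u_n\in U(n)$ and $\pi_{n+1,n}(u_{n+1})=u_n$ for all $n\ge1$. *)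

theory Defs
  imports Complex_Main "HOL-Combinatorics.Permutations"
begin

text \<open>Operators on l2 that fix every e_k with k > n are represented by their
  (infinite) matrices A :: nat => nat => complex w.r.t. the canonical basis
  (e_k)_{k >= 1}; column j is the image of e_j.  Entries outside the block
  {1..n} x {1..n} are those of the identity (index 0 is a dummy coordinate,
  also fixed).  With this representation U(m) is literally a subset of U(n)
  for m <= n, exactly as in the paper.\<close>

definition idm :: "nat \<Rightarrow> nat \<Rightarrow> complex" where
  "idm i j = (if i = j then 1 else 0)"

definition in_U :: "nat \<Rightarrow> (nat \<Rightarrow> nat \<Rightarrow> complex) \<Rightarrow> bool" where
  "in_U n A \<longleftrightarrow>
     (\<forall>i j. (i \<notin> {1..n} \<or> j \<notin> {1..n}) \<longrightarrow> A i j = idm i j) \<and>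
     (\<forall>i\<in>{1..n}. \<forall>j\<in>{1..n}. (\<Sum>k\<in>{1..n}. cnj (A k i) * A k j) = idm i j)"

text \<open>Range condition: range (u - v) is contained in (u - Id)(span {e_k : k > m}).
  For u in U(n), v in U(m), both u - v and u - Id vanish on e_k for k > n, so
  only coordinates in {1..n} matter; a vector of span {e_k : k > m} contributes
  to (u - Id) y only through its coordinates in {m+1..n}.\<close>

definition range_cond ::
  "nat \<Rightarrow> nat \<Rightarrow> (nat \<Rightarrow> nat \<Rightarrow> complex) \<Rightarrow> (nat \<Rightarrow> nat \<Rightarrow> complex) \<Rightarrow> bool" where
  "range_cond n m u v \<longleftrightarrow>
     (\<forall>x :: nat \<Rightarrow> complex. \<exists>y :: nat \<Rightarrow> complex.
        (\<forall>k. k \<notin> {m+1..n} \<longrightarrow> y k = 0) \<and>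
        (\<forall>i. (\<Sum>j\<in>{1..n}. (u i j - v i j) * x j) =
             (\<Sum>k\<in>{1..n}. (u i k - idm i k) * y k)))"

definition pi_proj ::
  "nat \<Rightarrow> nat \<Rightarrow> (nat \<Rightarrow> nat \<Rightarrow> complex) \<Rightarrow> (nat \<Rightarrow> nat \<Rightarrow> complex)" where
  "pi_proj n m u = (THE v. in_U m v \<and> range_cond n m u v)"

definition virtual_isometry :: "(nat \<Rightarrow> (nat \<Rightarrow> nat \<Rightarrow> complex)) \<Rightarrow> bool" where
  "virtual_isometry u \<longleftrightarrow>
     (\<forall>n\<ge>1. in_U n (u n) \<and> pi_proj (n+1) n (u (n+1)) = u n)"

text \<open>p_{n,m}: delete m+1..n from the cycle structure of sigma, i.e. each
  j in {1..m} is sent to the first element of its forward orbit (after at least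
  one step) lying in {1..m}.\<close>

definition perm_proj :: "nat \<Rightarrow> nat \<Rightarrow> (nat \<Rightarrow> nat) \<Rightarrow> (nat \<Rightarrow> nat)" where
  "perm_proj n m \<sigma> = (\<lambda>j. if j \<in> {1..m}
      then (\<sigma> ^^ (LEAST k. 0 < k \<and> (\<sigma> ^^ k) j \<in> {1..m})) j
      else j)"

definition virtual_permutation :: "(nat \<Rightarrow> (nat \<Rightarrow> nat)) \<Rightarrow> bool" where
  "virtual_permutation \<sigma> \<longleftrightarrow>
     (\<forall>n\<ge>1. \<sigma> n permutes {1..n}) \<and>
     (\<forall>n m. 1 \<le> m \<longrightarrow> m \<le> n \<longrightarrow> \<sigma> m = perm_proj n m (\<sigma> n))"

definition perm_matrix :: "(nat \<Rightarrow> nat) \<Rightarrow> (nat \<Rightarrow> nat \<Rightarrow> complex)" where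
  "perm_matrix \<sigma> = (\<lambda>i j. if \<sigma> j = i then 1 else 0)"

end

theory Submission
  imports Defs
begin

definition ret :: "(nat \<Rightarrow> nat) \<Rightarrow> nat set \<Rightarrow> nat \<Rightarrow> nat \<Rightarrow> bool" where
  "ret g T j y \<longleftrightarrow> (\<exists>k>0. (g^^k) j = y \<and> y \<in> T \<and> (\<forall>i. 0 < i \<and> i < k \<longrightarrow> (g^^i) j \<notin> T))"

lemma ret_unique:
  assumes "ret g T j y1" "ret g T j y2" shows "y1 = y2"
proof -
  obtain k1 where k1: "k1 > 0" "(g^^k1) j = y1" "y1 \<in> T" "\<forall>i. 0 < i \<and> i < k1 \<longrightarrow> (g^^i) j \<notin> T"
    using assms(1) unfolding ret_def by blast
  obtain k2 where k2: "k2 > 0" "(g^^k2) j = y2" "y2 \<in> T" "\<forall>i. 0 < i \<and> i < k2 \<longrightarrow> (g^^i) j \<notin> T"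
    using assms(2) unfolding ret_def by blast
  show ?thesis
  proof (cases k1 k2 rule: linorder_cases)
    case less thus ?thesis using k1 k2 by blast
  next
    case equal thus ?thesis using k1 k2 by blast
  next
    case greater thus ?thesis using k1 k2 by blast
  qed
qed

lemma perm_proj_ret:
  assumes j: "j \<in> {1..m}" and r: "ret g {1..m} j y"
  shows "perm_proj n m g j = y"
proof -
  obtain k where k: "k > 0" "(g^^k) j = y" "y \<in> {1..m}" "\<forall>i. 0 < i \<and> i < k \<longrightarrow> (g^^i) j \<notin> {1..m}"
    using r unfolding ret_def by blast
  define L where "L = (LEAST k. 0 < k \<and> (g ^^ k) j \<in> {1..m})"
  have PL: "0 < L \<and> (g ^^ L) j \<in> {1..m}" unfolding L_def
    by (rule LeastI[of _ k]) (use k in auto)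
  have "L \<le> k" unfolding L_def by (rule Least_le) (use k in auto)
  moreover have "\<not> L < k" using PL k(4) by blast
  ultimately have "L = k" by simp
  thus ?thesis using j k unfolding perm_proj_def L_def[symmetric] by simp
qed

lemma perm_proj_out: "j \<notin> {1..m} \<Longrightarrow> perm_proj n m g j = j"
  unfolding perm_proj_def by auto

lemma iter_in:
  assumes "g permutes S" shows "(g^^k) j \<in> insert j S"
proof (induction k)
  case 0 then show ?case by simp
next
  case (Suc k)
  then show ?case using assms
    by (cases "(g^^k) j \<in> S") (auto simp: permutes_in_image permutes_not_in)
qed

lemma period:
  assumes "g permutes S" "finite S"
  shows "\<exists>p>0. (g^^p) j = j"
proof -
  have "range (\<lambda>k. (g^^k) j) \<subseteq> insert j S" using iter_in[OF assms(1)] by blast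
  hence fin: "finite (range (\<lambda>k. (g^^k) j))" using assms(2) finite_subset by blast
  have "\<not> inj (\<lambda>k. (g^^k) j)"
  proof
    assume "inj (\<lambda>k. (g^^k) j)"
    hence "finite (UNIV :: nat set)" by (intro finite_imageD[OF fin]) simp
    thus False by simp
  qed
  then obtain a b where ab: "a \<noteq> b" "(g^^a) j = (g^^b) j" unfolding inj_def by blast
  have gen: "\<exists>p>0. (g^^p) j = j" if "a < b" "(g^^a) j = (g^^b) j" for a b
  proof -
    have ij: "inj (g^^a)" using inj_fn permutes_inj[OF assms(1)] by blast
    have "(g^^a) ((g^^(b-a)) j) = (g^^b) j"
      using that funpow_add[of a "b-a" g] by (simp add: o_def)
    hence "(g^^a) ((g^^(b-a)) j) = (g^^a) j" using that by simp
    hence "(g^^(b-a)) j = j" using ij by (simp add: inj_eq)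
    thus ?thesis using that by (intro exI[of _ "b-a"]) simp
  qed
  show ?thesis
  proof (cases "a < b")
    case True thus ?thesis using gen ab by blast
  next
    case False hence "b < a" using ab by simp
    thus ?thesis using gen[of b a] ab by simp
  qed
qed

lemma ret_exists:
  assumes "g permutes S" "finite S" "j \<in> T"
  shows "\<exists>y. ret g T j y"
proof -
  obtain p where p: "p > 0" "(g^^p) j = j" using period[OF assms(1,2), of j] by blast
  define L where "L = (LEAST k. 0 < k \<and> (g ^^ k) j \<in> T)"
  have PL: "0 < L \<and> (g ^^ L) j \<in> T" unfolding L_def
    by (rule LeastI[of _ p]) (simp add: p assms(3))
  have "\<forall>i. 0 < i \<and> i < L \<longrightarrow> (g^^i) j \<notin> T"
  proof (intro allI impI)
    fix i assume i: "0 < i \<and> i < L"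
    show "(g^^i) j \<notin> T"
      using not_less_Least[of i "\<lambda>k. 0 < k \<and> (g ^^ k) j \<in> T"] i unfolding L_def by blast
  qed
  hence "ret g T j ((g ^^ L) j)" using PL unfolding ret_def by blast
  thus ?thesis by blast
qed

lemma tau_formula:
  assumes s: "s permutes {1..N+1}" and x: "x \<in> {1..N}"
  shows "perm_proj (N+1) N s x = (if s x = N+1 then s (N+1) else s x)"
proof (cases "s x = N+1")
  case True
  have "s (N+1) \<noteq> N+1"
  proof
    assume "s (N+1) = N+1"
    hence "s (N+1) = s x" using True by simp
    hence "N+1 = x" using permutes_inj[OF s] by (simp add: inj_eq)
    thus False using x by simp
  qed
  moreover have "s (N+1) \<in> {1..N+1}" using permutes_in_image[OF s, of "N+1"] by simp
  ultimately have "ret s {1..N} x (s (N+1))" unfolding ret_def using True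
    by (intro exI[of _ 2]) (auto simp: numeral_2_eq_2 less_Suc_eq)
  thus ?thesis using perm_proj_ret[OF x] True by simp
next
  case False
  have "s x \<in> {1..N+1}" using permutes_in_image[OF s, of x] x by simp
  hence "ret s {1..N} x (s x)" unfolding ret_def using False
    by (intro exI[of _ 1]) auto
  thus ?thesis using perm_proj_ret[OF x] False by simp
qed

lemma tau_permutes:
  assumes s: "s permutes {1..N+1}"
  shows "perm_proj (N+1) N s permutes {1..N}"
proof -
  let ?t = "perm_proj (N+1) N s"
  have ij: "inj s" using permutes_inj[OF s] .
  have ins: "?t x \<in> {1..N}" if x: "x \<in> {1..N}" for x
  proof (cases "s x = N+1")
    case True
    have a: "s (N+1) \<in> {1..N+1}" using permutes_in_image[OF s, of "N+1"] by simp
    have "s (N+1) \<noteq> N+1"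
    proof
      assume "s (N+1) = N+1"
      hence "s (N+1) = s x" using True by simp
      hence "N+1 = x" using injD[OF ij] by blast
      thus False using x by simp
    qed
    hence "s (N+1) \<in> {1..N}" using a by simp
    thus ?thesis using tau_formula[OF s x] True by simp
  next
    case False
    have a: "s x \<in> {1..N+1}" using permutes_in_image[OF s, of x] x by simp
    hence "s x \<in> {1..N}" using False by simp
    thus ?thesis using tau_formula[OF s x] False by simp
  qed
  have inj: "inj_on ?t {1..N}"
  proof (rule inj_onI)
    fix x y assume xy: "x \<in> {1..N}" "y \<in> {1..N}" "?t x = ?t y"
    note fx = tau_formula[OF s xy(1)] and fy = tau_formula[OF s xy(2)]
    show "x = y"
    proof (cases "s x = N+1")
      case True note tx = this
      show ?thesis
      proof (cases "s y = N+1")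
        case True thus ?thesis using tx injD[OF ij, of x y] by simp
      next
        case False
        hence "s (N+1) = s y" using xy(3) fx fy tx by simp
        hence "N+1 = y" using injD[OF ij] by blast
        thus ?thesis using xy(2) by simp
      qed
    next
      case False note nx = this
      show ?thesis
      proof (cases "s y = N+1")
        case True
        hence "s x = s (N+1)" using xy(3) fx fy nx by simp
        hence "x = N+1" using injD[OF ij] by blast
        thus ?thesis using xy(1) by simp
      next
        case False
        hence "s x = s y" using xy(3) fx fy nx by simp
        thus ?thesis using injD[OF ij] by blast
      qed
    qed
  qed
  have "?t ` {1..N} \<subseteq> {1..N}" using ins by blast
  hence "?t ` {1..N} = {1..N}" using endo_inj_surj[OF _ _ inj] by simp
  hence "bij_betw ?t {1..N} {1..N}" using inj by (simp add: bij_betw_def)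
  moreover have "\<And>x. x \<notin> {1..N} \<Longrightarrow> ?t x = x" by (rule perm_proj_out)
  ultimately show ?thesis by (rule bij_imp_permutes)
qed

lemma orbit_sub:
  assumes tau: "\<forall>x\<in>{1..N}. \<tau> x = (if s x = N+1 then s (N+1) else s x) \<and> \<tau> x \<in> {1..N}"
    and j: "j \<in> {1..N}"
  shows "(\<tau>^^k) j \<in> {1..N} \<and> (\<exists>k'. (s^^k') j = (\<tau>^^k) j \<and> k \<le> k' \<and> (k = 0 \<longrightarrow> k' = 0) \<and>
     (\<forall>i'<k'. (s^^i') j = N+1 \<or> (\<exists>i<k. (s^^i') j = (\<tau>^^i) j \<and> (i = 0 \<longrightarrow> i' = 0))))"
proof (induction k)
  case 0 then show ?case using j by auto
next
  case (Suc k)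
  then obtain k' where k': "(s^^k') j = (\<tau>^^k) j" "k \<le> k'" "k = 0 \<longrightarrow> k' = 0"
     "\<forall>i'<k'. (s^^i') j = N+1 \<or> (\<exists>i<k. (s^^i') j = (\<tau>^^i) j \<and> (i = 0 \<longrightarrow> i' = 0))"
    and xin: "(\<tau>^^k) j \<in> {1..N}" by blast
  define x where "x = (\<tau>^^k) j"
  have xin': "x \<in> {1..N}" using xin x_def by simp
  have tx: "(\<tau>^^Suc k) j = \<tau> x" unfolding x_def by simp
  have tf: "\<tau> x = (if s x = N+1 then s (N+1) else s x)" and tin: "\<tau> x \<in> {1..N}"
    using tau xin' by blast+
  have sk': "(s^^k') j = x" using k'(1) x_def by simp
  have old: "(s^^i') j = N+1 \<or> (\<exists>i<Suc k. (s^^i') j = (\<tau>^^i) j \<and> (i = 0 \<longrightarrow> i' = 0))"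
    if "i' < k'" for i'
  proof -
    from k'(4) that have "(s^^i') j = N+1 \<or> (\<exists>i<k. (s^^i') j = (\<tau>^^i) j \<and> (i = 0 \<longrightarrow> i' = 0))"
      by blast
    thus ?thesis by (meson less_SucI)
  qed
  have cur: "\<exists>i<Suc k. (s^^k') j = (\<tau>^^i) j \<and> (i = 0 \<longrightarrow> k' = 0)"
    using k'(1,3) by blast
  have "(\<tau>^^Suc k) j \<in> {1..N}" using tin tx by simp
  moreover have "\<exists>k''. (s^^k'') j = (\<tau>^^Suc k) j \<and> Suc k \<le> k'' \<and> (Suc k = 0 \<longrightarrow> k'' = 0) \<and>
     (\<forall>i'<k''. (s^^i') j = N+1 \<or> (\<exists>i<Suc k. (s^^i') j = (\<tau>^^i) j \<and> (i = 0 \<longrightarrow> i' = 0)))"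
  proof (cases "s x = N+1")
    case False
    have e: "(s^^Suc k') j = (\<tau>^^Suc k) j" using sk' tx tf False by simp
    show ?thesis
    proof (intro exI[of _ "Suc k'"] conjI e)
      show "Suc k \<le> Suc k'" using k'(2) by simp
      show "Suc k = 0 \<longrightarrow> Suc k' = 0" by simp
      show "\<forall>i'<Suc k'. (s^^i') j = N+1 \<or> (\<exists>i<Suc k. (s^^i') j = (\<tau>^^i) j \<and> (i = 0 \<longrightarrow> i' = 0))"
      proof (intro allI impI)
        fix i' assume "i' < Suc k'"
        then consider "i' < k'" | "i' = k'" by linarith
        then show "(s^^i') j = N+1 \<or> (\<exists>i<Suc k. (s^^i') j = (\<tau>^^i) j \<and> (i = 0 \<longrightarrow> i' = 0))"
        proof cases
          case 1 then show ?thesis using old by blast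
        next
          case 2 then show ?thesis using cur by blast
        qed
      qed
    qed
  next
    case True
    have e: "(s^^Suc (Suc k')) j = (\<tau>^^Suc k) j" using sk' tx tf True by simp
    show ?thesis
    proof (intro exI[of _ "Suc (Suc k')"] conjI e)
      show "Suc k \<le> Suc (Suc k')" using k'(2) by simp
      show "Suc k = 0 \<longrightarrow> Suc (Suc k') = 0" by simp
      show "\<forall>i'<Suc (Suc k'). (s^^i') j = N+1 \<or> (\<exists>i<Suc k. (s^^i') j = (\<tau>^^i) j \<and> (i = 0 \<longrightarrow> i' = 0))"
      proof (intro allI impI)
        fix i' assume "i' < Suc (Suc k')"
        then consider "i' < k'" | "i' = k'" | "i' = Suc k'" by linarith
        then show "(s^^i') j = N+1 \<or> (\<exists>i<Suc k. (s^^i') j = (\<tau>^^i) j \<and> (i = 0 \<longrightarrow> i' = 0))"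
        proof cases
          case 1 then show ?thesis using old by blast
        next
          case 2 then show ?thesis using cur by blast
        next
          case 3 then show ?thesis using sk' True by simp
        qed
      qed
    qed
  qed
  ultimately show ?case by blast
qed

lemma ret_transfer:
  assumes tau: "\<forall>x\<in>{1..N}. \<tau> x = (if s x = N+1 then s (N+1) else s x) \<and> \<tau> x \<in> {1..N}"
    and j: "j \<in> {1..N}" and T: "T \<subseteq> {1..N}" and r: "ret \<tau> T j y"
  shows "ret s T j y"
proof -
  obtain k where k: "k > 0" "(\<tau>^^k) j = y" "y \<in> T" "\<forall>i. 0 < i \<and> i < k \<longrightarrow> (\<tau>^^i) j \<notin> T"
    using r unfolding ret_def by blast
  obtain k' where k': "(s^^k') j = (\<tau>^^k) j" "k \<le> k'"
     "\<forall>i'<k'. (s^^i') j = N+1 \<or> (\<exists>i<k. (s^^i') j = (\<tau>^^i) j \<and> (i = 0 \<longrightarrow> i' = 0))"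
    using orbit_sub[OF tau j, of k] by blast
  have "\<forall>i'. 0 < i' \<and> i' < k' \<longrightarrow> (s^^i') j \<notin> T"
  proof (intro allI impI)
    fix i' assume i': "0 < i' \<and> i' < k'"
    then consider "(s^^i') j = N+1" | i where "i<k" "(s^^i') j = (\<tau>^^i) j" "i = 0 \<longrightarrow> i' = 0"
      using k'(3) by blast
    then show "(s^^i') j \<notin> T"
    proof cases
      case 1 then show ?thesis using T by auto
    next
      case 2 then show ?thesis using k(4) i' by auto
    qed
  qed
  thus ?thesis unfolding ret_def using k k' by (intro exI[of _ k']) auto
qed

lemma proj_trans:
  assumes s: "s permutes {1..N+1}" and m: "m \<le> N"
  shows "perm_proj (N+1) m s = perm_proj N m (perm_proj (N+1) N s)"
proof
  fix j
  let ?t = "perm_proj (N+1) N s"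
  show "perm_proj (N+1) m s j = perm_proj N m ?t j"
  proof (cases "j \<in> {1..m}")
    case False then show ?thesis by (simp add: perm_proj_out)
  next
    case True
    have tp: "?t permutes {1..N}" using tau_permutes[OF s] .
    obtain y where y: "ret ?t {1..m} j y" using ret_exists[OF tp _ True] by blast
    have tau: "\<forall>x\<in>{1..N}. ?t x = (if s x = N+1 then s (N+1) else s x) \<and> ?t x \<in> {1..N}"
    proof
      fix x assume x: "x \<in> {1..N}"
      have "?t x \<in> {1..N}" using permutes_in_image[OF tp, of x] x by blast
      thus "?t x = (if s x = N+1 then s (N+1) else s x) \<and> ?t x \<in> {1..N}"
        using tau_formula[OF s x] by blast
    qed
    have "ret s {1..m} j y" by (rule ret_transfer[OF tau _ _ y]) (use True m in auto)
    then have "perm_proj (N+1) m s j = y" by (rule perm_proj_ret[OF True])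
    moreover have "perm_proj N m ?t j = y" using y by (rule perm_proj_ret[OF True])
    ultimately show ?thesis by simp
  qed
qed

lemma proj_self:
  assumes s: "s permutes {1..n}" shows "perm_proj n n s = s"
proof
  fix j show "perm_proj n n s j = s j"
  proof (cases "j \<in> {1..n}")
    case True
    have "s j \<in> {1..n}" using permutes_in_image[OF s, of j] True by simp
    then have "ret s {1..n} j (s j)" unfolding ret_def
      by (intro exI[of _ 1]) auto
    then show ?thesis using perm_proj_ret[OF True] by simp
  next
    case False then show ?thesis using s perm_proj_out[OF False] by (simp add: permutes_not_in)
  qed
qed

lemma pm_inj: assumes "perm_matrix f = perm_matrix g" shows "f = g"
proof
  fix x
  have "perm_matrix f (f x) x = perm_matrix g (f x) x" using assms by simp
  thus "f x = g x" unfolding perm_matrix_def by (simp split: if_splits)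
qed

lemma inU_pm: assumes s: "s permutes {1..n}" shows "in_U n (perm_matrix s)"
  unfolding in_U_def
proof (intro conjI allI impI ballI)
  fix i j assume h: "i \<notin> {1..n} \<or> j \<notin> {1..n}"
  show "perm_matrix s i j = idm i j"
  proof (cases "j \<in> {1..n}")
    case True then have "i \<notin> {1..n}" using h by blast
    moreover have "s j \<in> {1..n}" using permutes_in_image[OF s, of j] True by blast
    ultimately show ?thesis unfolding perm_matrix_def idm_def using True by auto
  next
    case False then have "s j = j" using permutes_not_in[OF s] by blast
    thus ?thesis unfolding perm_matrix_def idm_def by auto
  qed
next
  fix i j assume i: "i \<in> {1..n}" and j: "j \<in> {1..n}"
  have si: "s i \<in> {1..n}" using permutes_in_image[OF s, of i] i by blast
  have "(\<Sum>k\<in>{1..n}. cnj (perm_matrix s k i) * perm_matrix s k j) =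
        (\<Sum>k\<in>{1..n}. if k = s i then (if s j = s i then 1 else 0) else 0)"
    by (rule sum.cong) (auto simp: perm_matrix_def)
  also have "\<dots> = (if s j = s i then 1 else 0)" using si by simp
  also have "\<dots> = idm i j" using injD[OF permutes_inj[OF s]] unfolding idm_def by auto
  finally show "(\<Sum>k\<in>{1..n}. cnj (perm_matrix s k i) * perm_matrix s k j) = idm i j" .
qed

lemma rhs_delta:
  fixes A :: "nat \<Rightarrow> complex" and N :: nat
  shows "(\<Sum>k\<in>{1..N+1}. (A k) * (if k = N+1 then c else 0)) = A (N+1) * (c::complex)"
proof -
  have "(\<Sum>k\<in>{1..N+1}. (A k) * (if k = N+1 then c else 0)) =
        (\<Sum>k\<in>{1..N+1}. if k = N+1 then A k * c else 0)"
    by (rule sum.cong) auto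
  also have "\<dots> = A (N+1) * c" by (subst sum.delta[OF finite_atLeastAtMost]) simp
  finally show ?thesis .
qed

lemma lhs_delta:
  fixes A :: "nat \<Rightarrow> complex" and M :: nat
  assumes "j \<in> {1..M}"
  shows "(\<Sum>k\<in>{1..M}. (A k) * (if k = j then 1 else 0)) = (A j :: complex)"
proof -
  have "(\<Sum>k\<in>{1..M}. (A k) * (if k = j then 1 else 0)) =
        (\<Sum>k\<in>{1..M}. if k = j then A k else 0)"
    by (rule sum.cong) auto
  also have "\<dots> = A j" using assms by (subst sum.delta[OF finite_atLeastAtMost]) simp
  finally show ?thesis .
qed

lemma pi_pm:
  assumes s: "s permutes {1..N+1}"
  shows "pi_proj (N+1) N (perm_matrix s) = perm_matrix (perm_proj (N+1) N s)"
proof -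
  let ?t = "perm_proj (N+1) N s"
  let ?u = "perm_matrix s"
  have tp: "?t permutes {1..N}" by (rule tau_permutes[OF s])
  have ij: "inj s" using permutes_inj[OF s] .
  have tout: "?t j = j" if "j \<notin> {1..N}" for j using that by (rule perm_proj_out)
  have tf: "?t j = (if s j = N+1 then s (N+1) else s j)" if "j \<in> {1..N}" for j
    using tau_formula[OF s that] .
  define a where "a = s (N+1)"
  have tN: "?t (N+1) = N+1" by (rule tout) simp
  have rc: "range_cond (N+1) N ?u (perm_matrix ?t)"
    unfolding range_cond_def
  proof
    fix x :: "nat \<Rightarrow> complex"
    show "\<exists>y. (\<forall>k. k \<notin> {N + 1..N + 1} \<longrightarrow> y k = 0) \<and>
           (\<forall>i. (\<Sum>j\<in>{1..N + 1}. (?u i j - perm_matrix ?t i j) * x j) =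
                (\<Sum>k\<in>{1..N + 1}. (?u i k - idm i k) * y k))"
    proof (cases "a = N+1")
      case True
      have eq: "?t j = s j" if "j \<in> {1..N+1}" for j
      proof (cases "j = N+1")
        case True thus ?thesis using tN \<open>a = N+1\<close> a_def by simp
      next
        case False
        hence jN: "j \<in> {1..N}" using that by auto
        have "s j \<noteq> N+1"
        proof
          assume "s j = N+1"
          hence "s j = s (N+1)" using \<open>a = N+1\<close> a_def by simp
          thus False using injD[OF ij] False by blast
        qed
        thus ?thesis using tf[OF jN] by simp
      qed
      show ?thesis
      proof (intro exI[of _ "\<lambda>k. 0"] conjI allI impI)
        fix i
        have "(\<Sum>j\<in>{1..N + 1}. (?u i j - perm_matrix ?t i j) * x j) = 0"
          by (rule sum.neutral) (use eq in \<open>simp add: perm_matrix_def\<close>)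
        thus "(\<Sum>j\<in>{1..N + 1}. (?u i j - perm_matrix ?t i j) * x j) =
                (\<Sum>k\<in>{1..N + 1}. (?u i k - idm i k) * 0)" by simp
      qed simp
    next
      case False
      obtain b where b: "s b = N+1" using permutes_surj[OF s] by (metis surjD)
      have bne: "b \<noteq> N+1" using b False a_def by auto
      have "b \<in> {1..N+1}"
      proof (rule ccontr)
        assume "b \<notin> {1..N+1}"
        hence "s b = b" using permutes_not_in[OF s] by blast
        thus False using b bne by simp
      qed
      hence bN: "b \<in> {1..N}" using bne by auto
      have tb: "?t b = a" using tf[OF bN] b a_def by simp
      have eq: "?t j = s j" if "j \<in> {1..N}" "j \<noteq> b" for j
      proof -
        have "s j \<noteq> N+1" using b injD[OF ij, of j b] that(2) by auto
        thus ?thesis using tf[OF that(1)] by simp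
      qed
      define c where "c = x (N+1) - x b"
      show ?thesis
      proof (intro exI[of _ "\<lambda>k. if k = N+1 then c else 0"] conjI allI impI)
        fix k :: nat assume "k \<notin> {N + 1..N + 1}"
        thus "(if k = N+1 then c else 0) = 0" by simp
      next
        fix i
        define f where "f = (\<lambda>j. (?u i j - perm_matrix ?t i j) * x j)"
        have "(\<Sum>j\<in>{1..N+1}. f j) = (\<Sum>j\<in>{b, N+1}. f j)"
        proof (rule sum.mono_neutral_right)
          show "{b, N+1} \<subseteq> {1..N+1}" using bN by auto
          show "\<forall>j\<in>{1..N+1} - {b, N+1}. f j = 0"
          proof
            fix j assume j: "j \<in> {1..N+1} - {b, N+1}"
            hence "j \<in> {1..N}" "j \<noteq> b" by auto
            thus "f j = 0" using eq unfolding f_def perm_matrix_def by simp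
          qed
        qed simp
        also have "\<dots> = f b + f (N+1)" using bne by simp
        also have "\<dots> = (?u i (N+1) - idm i (N+1)) * c"
          unfolding f_def c_def perm_matrix_def idm_def using b tb tN a_def[symmetric] False
          by (cases "i = N+1"; cases "i = a") (auto simp: algebra_simps)
        also have "\<dots> = (\<Sum>k\<in>{1..N+1}. (?u i k - idm i k) * (if k = N+1 then c else 0))"
          by (rule rhs_delta[symmetric])
        finally show "(\<Sum>j\<in>{1..N + 1}. (?u i j - perm_matrix ?t i j) * x j) =
           (\<Sum>k\<in>{1..N+1}. (?u i k - idm i k) * (if k = N+1 then c else 0))"
          unfolding f_def .
      qed
    qed
  qed
  have uniq: "v = perm_matrix ?t" if v: "in_U N v" "range_cond (N+1) N ?u v" for v
  proof (intro ext)
    fix i j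
    show "v i j = perm_matrix ?t i j"
    proof (cases "j \<in> {1..N}")
      case False
      have "v i j = idm i j" using v(1) False unfolding in_U_def by blast
      thus ?thesis using tout[OF False] unfolding perm_matrix_def idm_def by auto
    next
      case True
      define x where "x = (\<lambda>k. if k = j then 1 else (0::complex))"
      from v(2) have "\<forall>x. \<exists>y. (\<forall>k. k \<notin> {N+1..N+1} \<longrightarrow> y k = 0) \<and>
        (\<forall>i. (\<Sum>j\<in>{1..N+1}. (?u i j - v i j) * x j) = (\<Sum>k\<in>{1..N+1}. (?u i k - idm i k) * y k))"
        unfolding range_cond_def .
      then obtain y where y0: "\<forall>k. k \<notin> {N+1..N+1} \<longrightarrow> y k = 0"
        and yeq: "\<forall>i. (\<Sum>j'\<in>{1..N+1}. (?u i j' - v i j') * x j') = (\<Sum>k\<in>{1..N+1}. (?u i k - idm i k) * y k)"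
        by blast
      have ysh: "y = (\<lambda>k. if k = N+1 then y (N+1) else 0)" using y0 by auto
      define c where "c = y (N+1)"
      have jN1: "j \<in> {1..N+1}" using True by auto
      have E: "?u i' j - v i' j = (?u i' (N+1) - idm i' (N+1)) * c" for i'
      proof -
        have "?u i' j - v i' j = (\<Sum>j'\<in>{1..N+1}. (?u i' j' - v i' j') * x j')"
          unfolding x_def by (rule lhs_delta[OF jN1, symmetric])
        also have "\<dots> = (\<Sum>k\<in>{1..N+1}. (?u i' k - idm i' k) * y k)" using yeq by blast
        also have "\<dots> = (\<Sum>k\<in>{1..N+1}. (?u i' k - idm i' k) * (if k = N+1 then c else 0))"
          unfolding c_def by (subst ysh) simp
        also have "\<dots> = (?u i' (N+1) - idm i' (N+1)) * c" by (rule rhs_delta)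
        finally show ?thesis .
      qed
      have vN: "v (N+1) j = 0" using v(1) True unfolding in_U_def idm_def by auto
      have jne: "j \<noteq> N+1" using True by auto
      show ?thesis
      proof (cases "a = N+1")
        case True
        have "s j \<noteq> N+1"
        proof
          assume "s j = N+1"
          hence "s j = s (N+1)" using \<open>a = N+1\<close> a_def by simp
          thus False using injD[OF ij] jne by blast
        qed
        hence tj: "?t j = s j" using tf[OF \<open>j \<in> {1..N}\<close>] by simp
        have "?u i (N+1) - idm i (N+1) = 0"
          unfolding perm_matrix_def idm_def using True a_def by auto
        hence "v i j = ?u i j" using E[of i] by simp
        thus ?thesis using tj unfolding perm_matrix_def by simp
      next
        case False
        have EN: "?u (N+1) j = - c"
          using E[of "N+1"] vN False a_def unfolding perm_matrix_def idm_def by simp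
        show ?thesis
        proof (cases "s j = N+1")
          case True
          have tj: "?t j = a" using tf[OF \<open>j \<in> {1..N}\<close>] True a_def by simp
          have "- c = 1" using EN True unfolding perm_matrix_def by simp
          hence c1: "c = -1" by (simp add: minus_equation_iff)
          show ?thesis using E[of i] c1 True tj False a_def[symmetric]
            unfolding perm_matrix_def idm_def
            by (cases "i = N+1"; cases "i = a") (auto simp: algebra_simps)
        next
          case nj: False
          have tj: "?t j = s j" using tf[OF \<open>j \<in> {1..N}\<close>] nj by simp
          have c0: "c = 0" using EN nj unfolding perm_matrix_def by simp
          have "v i j = ?u i j" using E[of i] c0 by simp
          thus ?thesis using tj unfolding perm_matrix_def by simp
        qed
      qed
    qed
  qed
  show ?thesis unfolding pi_proj_def
  proof (rule the_equality)
    show "in_U N (perm_matrix ?t) \<and> range_cond (N+1) N ?u (perm_matrix ?t)"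
      using inU_pm[OF tp] rc by blast
  next
    fix v assume "in_U N v \<and> range_cond (N+1) N ?u v"
    thus "v = perm_matrix ?t" using uniq by blast
  qed
qed

theorem proposition2p3:
  fixes \<sigma> :: "nat \<Rightarrow> (nat \<Rightarrow> nat)"
  assumes "\<And>n. n \<ge> 1 \<Longrightarrow> \<sigma> n permutes {1..n}"
  shows "virtual_isometry (\<lambda>n. perm_matrix (\<sigma> n)) \<longleftrightarrow> virtual_permutation \<sigma>"
proof -
  have sp1: "\<sigma> (n+1) permutes {1..n+1}" for n using assms[of "n+1"] by simp
  have pm_iff: "perm_matrix f = perm_matrix g \<longleftrightarrow> f = g" for f g using pm_inj by blast
  have A: "pi_proj (n+1) n (perm_matrix (\<sigma> (n+1))) = perm_matrix (perm_proj (n+1) n (\<sigma> (n+1)))" for n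
    by (rule pi_pm[OF sp1])
  have B: "in_U n (perm_matrix (\<sigma> n))" if "1 \<le> n" for n by (rule inU_pm[OF assms[OF that]])
  have VI: "virtual_isometry (\<lambda>n. perm_matrix (\<sigma> n)) \<longleftrightarrow> (\<forall>n\<ge>1. perm_proj (n+1) n (\<sigma> (n+1)) = \<sigma> n)"
    unfolding virtual_isometry_def using A B pm_iff by simp
  have VP: "virtual_permutation \<sigma> \<longleftrightarrow> (\<forall>n\<ge>1. perm_proj (n+1) n (\<sigma> (n+1)) = \<sigma> n)"
  proof
    assume h: "virtual_permutation \<sigma>"
    have h2: "\<forall>n m. 1 \<le> m \<longrightarrow> m \<le> n \<longrightarrow> \<sigma> m = perm_proj n m (\<sigma> n)"
      using h unfolding virtual_permutation_def by blast
    show "\<forall>n\<ge>1. perm_proj (n+1) n (\<sigma> (n+1)) = \<sigma> n"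
    proof (intro allI impI)
      fix n :: nat assume n: "1 \<le> n"
      from h2[rule_format, of n "n+1"] n show "perm_proj (n+1) n (\<sigma> (n+1)) = \<sigma> n" by simp
    qed
  next
    assume c: "\<forall>n\<ge>1. perm_proj (n+1) n (\<sigma> (n+1)) = \<sigma> n"
    have gen: "\<sigma> m = perm_proj (m+d) m (\<sigma> (m+d))" if m: "1 \<le> m" for m d
    proof (induction d)
      case 0 show ?case using proj_self[OF assms[OF m]] by simp
    next
      case (Suc d)
      have sp: "\<sigma> (m+d+1) permutes {1..m+d+1}" by (rule sp1)
      have "perm_proj (m+d+1) m (\<sigma> (m+d+1)) = perm_proj (m+d) m (perm_proj (m+d+1) (m+d) (\<sigma> (m+d+1)))"
        by (rule proj_trans[OF sp]) simp
      also have "perm_proj (m+d+1) (m+d) (\<sigma> (m+d+1)) = \<sigma> (m+d)"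
        using c m by simp
      finally show ?case using Suc.IH by simp
    qed
    show "virtual_permutation \<sigma>" unfolding virtual_permutation_def
    proof (intro conjI allI impI)
      fix n :: nat assume "1 \<le> n" thus "\<sigma> n permutes {1..n}" by (rule assms)
    next
      fix n m :: nat assume nm: "1 \<le> m" "m \<le> n"
      then obtain d where "n = m + d" using le_Suc_ex by blast
      thus "\<sigma> m = perm_proj n m (\<sigma> n)" using gen[OF nm(1)] by simp
    qed
  qed
  show ?thesis using VI VP by simp
qed

end
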